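(* Let $f(x)=x^5+px^4+qx^3+rx^2+sx+t$ with real coefficients and let $D$, $L_1$, $L_2$, $L_3$ be as in the context. Then $f$ has a quintuple root (i.e. $f(x)=(x-a)^5$ for some $a$) if and only if $D=0$, $L_1=0$, $L_2=0$ and $L_3=0$.
   Context: Let $\alpha_1,\dots,\alpha_5\in\mathbb{C}$ be the roots of $f$ listed with multiplicity. $D=\prod_{1\le i<j\le 5}(\alpha_i-\alpha_j)^2$ is the discriminant of $f$. $L_3=2p^2-5q$. $L_2=40qs-16p^2s-8rp^3+38rpq+3p^2q^2-12q^3-45r^2$. $L_1=-264ps^2r-12p^3tq^2+36r^3pq-124srpq^2+28srp^3q+260sptq-132p^2qrt+240pr^2t+234sqr^2+32p^4tr+48ptq^3-56sp^3t-80q^2rt+194qs^2p^2-600str-6q^3sp^2+2p^2q^2r^2-12sr^2p^2-54r^4+320s^3-8q^3r^2-8r^3p^3+250qt^2-176q^2s^2+24q^4s-36p^4s^2-100p^2t^2$. *)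

theory Defs
  imports Complex_Main
begin

definition quintic :: "'a::comm_ring_1 \<Rightarrow> 'a \<Rightarrow> 'a \<Rightarrow> 'a \<Rightarrow> 'a \<Rightarrow> 'a \<Rightarrow> 'a" where
  "quintic p q r s t x = x^5 + p*x^4 + q*x^3 + r*x^2 + s*x + t"

definition discr5 :: "(nat \<Rightarrow> complex) \<Rightarrow> complex" where
  "discr5 \<alpha> = (\<Prod>j<5. \<Prod>i<j. (\<alpha> i - \<alpha> j)^2)"

definition L3 :: "real \<Rightarrow> real \<Rightarrow> real" where
  "L3 p q = 2*p^2 - 5*q"

definition L2 :: "real \<Rightarrow> real \<Rightarrow> real \<Rightarrow> real \<Rightarrow> real" where
  "L2 p q r s = 40*q*s - 16*p^2*s - 8*r*p^3 + 38*r*p*q + 3*p^2*q^2 - 12*q^3 - 45*r^2"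

definition L1 :: "real \<Rightarrow> real \<Rightarrow> real \<Rightarrow> real \<Rightarrow> real \<Rightarrow> real" where
  "L1 p q r s t = -264*p*s^2*r - 12*p^3*t*q^2 + 36*r^3*p*q - 124*s*r*p*q^2 + 28*s*r*p^3*q
    + 260*s*p*t*q - 132*p^2*q*r*t + 240*p*r^2*t + 234*s*q*r^2 + 32*p^4*t*r + 48*p*t*q^3
    - 56*s*p^3*t - 80*q^2*r*t + 194*q*s^2*p^2 - 600*s*t*r - 6*q^3*s*p^2 + 2*p^2*q^2*r^2
    - 12*s*r^2*p^2 - 54*r^4 + 320*s^3 - 8*q^3*r^2 - 8*r^3*p^3 + 250*q*t^2 - 176*q^2*s^2
    + 24*q^4*s - 36*p^4*s^2 - 100*p^2*t^2"

end

theory Submission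
  imports Defs
begin

lemma dbl_root_deriv:
  fixes F H :: "complex \<Rightarrow> complex"
  assumes "\<And>x. F x = (x-b)^2 * H x" and "(H has_field_derivative H') (at b)"
  shows "(F has_field_derivative 0) (at b)"
proof -
  have e: "F = (\<lambda>x. (x-b)^2 * H x)" using assms(1) by auto
  show ?thesis unfolding e
    by (rule derivative_eq_intros refl assms(2))+ simp
qed

lemma prod_split2:
  fixes \<alpha> :: "nat \<Rightarrow> complex"
  assumes "i < j" "j < 5" "\<alpha> i = \<alpha> j"
  shows "(\<Prod>k<5. (x - \<alpha> k)) = (x - \<alpha> i)^2 * (\<Prod>k\<in>{..<5}-{i}-{j}. (x - \<alpha> k))"
proof -
  have "(\<Prod>k<5. (x - \<alpha> k)) = (x - \<alpha> i) * (\<Prod>k\<in>{..<5}-{i}. (x - \<alpha> k))"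
    using assms by (subst prod.remove[of _ i]) auto
  also have "(\<Prod>k\<in>{..<5}-{i}. (x - \<alpha> k)) = (x - \<alpha> j) * (\<Prod>k\<in>{..<5}-{i}-{j}. (x - \<alpha> k))"
    using assms by (subst prod.remove[of _ j]) auto
  finally show ?thesis using assms by (simp add: power2_eq_square)
qed

theorem mainTheorem5:
  fixes p q r s t :: real and \<alpha> :: "nat \<Rightarrow> complex"
  assumes roots: "\<And>x::complex. quintic (of_real p) (of_real q) (of_real r) (of_real s) (of_real t) x
                     = (\<Prod>i<5. (x - \<alpha> i))"
  shows "(\<exists>a::real. \<forall>x::real. quintic p q r s t x = (x - a)^5) \<longleftrightarrow>
         (discr5 \<alpha> = 0 \<and> L1 p q r s t = 0 \<and> L2 p q r s = 0 \<and> L3 p q = 0)"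
proof
  assume "\<exists>a::real. \<forall>x::real. quintic p q r s t x = (x - a)^5"
  then obtain a where ha: "\<And>x::real. quintic p q r s t x = (x - a)^5" by blast
  have e0: "t = -(a^5)" using ha[of 0] by (simp add: quintic_def)
  have e1: "1 + p + q + r + s + t = (1-a)^5" using ha[of 1] by (simp add: quintic_def)
  have e2: "-1 + p - q + r - s + t = (-1-a)^5" using ha[of "-1"] by (simp add: quintic_def)
  have e3: "32 + 16*p + 8*q + 4*r + 2*s + t = (2-a)^5" using ha[of 2] by (simp add: quintic_def)
  have e4: "-32 + 16*p - 8*q + 4*r - 2*s + t = (-2-a)^5" using ha[of "-2"] by (simp add: quintic_def)
  have E: "p = -(5*a) \<and> q = 10*a^2 \<and> r = -(10*a^3) \<and> s = 5*a^4 \<and> t = -(a^5)"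
    using e0 e1 e2 e3 e4 by (simp add: power_def algebra_simps numeral_eq_Suc) linarith?
  have Ls: "L1 p q r s t = 0 \<and> L2 p q r s = 0 \<and> L3 p q = 0"
    using E unfolding L1_def L2_def L3_def by (simp add: algebra_simps power_def numeral_eq_Suc)
  have C: "\<And>x::complex. quintic (of_real p) (of_real q) (of_real r) (of_real s) (of_real t) x
            = (x - of_real a)^5"
    using E by (simp add: quintic_def algebra_simps power_def numeral_eq_Suc)
  have rt: "\<alpha> k = of_real a" if "k < 5" for k
  proof -
    have "(\<Prod>i<5. (\<alpha> k - \<alpha> i)) = 0" using that by (intro prod_zero) auto
    then have "(\<alpha> k - of_real a)^5 = 0" using roots[of "\<alpha> k"] C[of "\<alpha> k"] by simp
    then show ?thesis by simp
  qed
  have "discr5 \<alpha> = 0" unfolding discr5_def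
    by (rule prod_zero, simp, rule bexI[of _ 1]) (auto simp: rt)
  then show "discr5 \<alpha> = 0 \<and> L1 p q r s t = 0 \<and> L2 p q r s = 0 \<and> L3 p q = 0" using Ls by simp
next
  assume H: "discr5 \<alpha> = 0 \<and> L1 p q r s t = 0 \<and> L2 p q r s = 0 \<and> L3 p q = 0"
  have hq: "q = 2*p^2/5" using H unfolding L3_def by simp
  define R where "R = r - 2*p^3/25"
  have "L2 p q r s = -45*R^2" unfolding L2_def R_def hq by (simp add: algebra_simps power_def numeral_eq_Suc)
  then have "R = 0" using H by simp
  then have hr: "r = 2*p^3/25" unfolding R_def by simp
  define S where "S = s - p^4/125"
  have sS: "s = p^4/125 + S" unfolding S_def by simp
  have "L1 p q r s t = 320*S^3" unfolding L1_def sS hq hr by (simp add: field_simps power_def numeral_eq_Suc)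
  then have "S = 0" using H by simp
  then have hs: "s = p^4/125" unfolding S_def by simp
  define T where "T = t - p^5/3125"
  have ht: "t = p^5/3125 + T" unfolding T_def by simp
  have C: "\<And>x::complex. quintic (of_real p) (of_real q) (of_real r) (of_real s) (of_real t) x
            = (x + of_real p/5)^5 + of_real T"
    unfolding quintic_def hq hr hs ht by (simp add: field_simps power_def numeral_eq_Suc)
  from H have "\<exists>j<5. \<exists>i<j. \<alpha> i = \<alpha> j" unfolding discr5_def by (auto simp: prod_zero_iff)
  then obtain i j where ij: "i < j" "j < 5" "\<alpha> i = \<alpha> j" by blast
  define b where "b = \<alpha> i"
  define F where "F = (\<lambda>x::complex. (x + of_real p/5)^5 + of_real T)"
  have FH: "F x = (x - b)^2 * (\<Prod>k\<in>{..<5}-{i}-{j}. (x - \<alpha> k))" for x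
    unfolding F_def b_def using prod_split2[OF ij, of x] roots[of x] C[of x] by simp
  have "((\<lambda>x. \<Prod>k\<in>{..<5}-{i}-{j}. (x - \<alpha> k)) has_field_derivative
     (\<Sum>k\<in>{..<5}-{i}-{j}. 1 * (\<Prod>y\<in>{..<5}-{i}-{j}-{k}. (b - \<alpha> y)))) (at b)"
    by (rule has_field_derivative_prod) (auto intro!: derivative_eq_intros)
  from dbl_root_deriv[OF FH this] have d0: "(F has_field_derivative 0) (at b)" .
  have "(F has_field_derivative 5 * (b + of_real p/5)^4) (at b)"
    unfolding F_def by (auto intro!: derivative_eq_intros)
  with d0 have "5 * (b + of_real p/5)^4 = 0" using DERIV_unique by blast
  then have b: "b = - of_real p / 5" by (simp add: add_eq_0_iff)
  have "F b = 0" using FH[of b] by simp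
  then have "T = 0" unfolding F_def b by simp
  show "\<exists>a::real. \<forall>x::real. quintic p q r s t x = (x - a)^5"
    by (rule exI[of _ "-p/5"], rule allI) (simp add: quintic_def hq hr hs ht \<open>T = 0\<close> field_simps power_def numeral_eq_Suc)
qed

end
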